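(* Let $A\in(0,1)$, $M<0$, $Q>0$, $S>0$ and consider the planar system $$\frac{du}{d\tau}=u^2\big((u+A)(1-u)(u-M)-Qv\big),\qquad \frac{dv}{d\tau}=S(u+A)(u-v)v$$ on $\{u\ge 0,\ v\ge 0\}$. Put $T=1-A+M$, $L=A(M+1)-Q-M$ and $g(u)=u^3-Tu^2-Lu+AM$. Let $u^*\in(0,1)$ be a root of $g$, and set $\Delta=(u^*-T)^2-4\big(u^*(u^*-T)-L\big)$ and $u^*_\pm=\tfrac12\big(T-u^*\pm\sqrt{\Delta}\big)$ whenever $\Delta\ge 0$, with the root $u^*$ chosen so that $u^*\le u^*_-\le u^*_+$. Assume $T>0$, $L<0$ and $\Delta=0$, so that the equilibria $P_2=(u^*_-,u^*_-)$ and $P_3=(u^*_+,u^*_+)$ coincide. Assume moreover that $$S=\frac{Q\,(T-u^* )}{1+A+M-u^*}.$$ Then the equilibrium $P_2=P_3=(u^*_-,u^*_-)$ is a cusp point.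
   Context: The positive equilibria of the system are the points $(u,u)$ with $u>0$ a root of $g$; since $g(0)=AM<0<Q=g(1)$, $g$ always has a root in $(0,1)$. For such a root $u^*$, $\Delta$ is the discriminant and $u^*_\pm$ are the roots of the quadratic $g(u)/(u-u^* )=u^2+(u^*-T)u+u^*(u^*-T)-L$. A cusp point (in the sense of Andronov et al.) is an equilibrium whose Jacobian matrix is nonzero and nilpotent, i.e. has a double zero eigenvalue with a single Jordan block; it is a codimension-two (Bogdanov--Takens type) singularity. *)

theory Defs
  imports "HOL-Analysis.Analysis"
begin

definition vfield :: "real \<Rightarrow> real \<Rightarrow> real \<Rightarrow> real \<Rightarrow> real \<times> real \<Rightarrow> real \<times> real" where
  "vfield A M Q S = (\<lambda>(u, v).
     (u\<^sup>2 * ((u + A) * (1 - u) * (u - M) - Q * v),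
      S * (u + A) * (u - v) * v))"

definition nilpotent_map :: "('a::real_vector \<Rightarrow> 'a) \<Rightarrow> bool" where
  "nilpotent_map J \<longleftrightarrow> (\<exists>n. (J ^^ n) = (\<lambda>_. 0))"

text \<open>Cusp point (Andronov et al.): an equilibrium whose Jacobian (the Frechet
  derivative of the field at the point) is nonzero and nilpotent.\<close>
definition cusp_point :: "('a::real_normed_vector \<Rightarrow> 'a) \<Rightarrow> 'a \<Rightarrow> bool" where
  "cusp_point F p \<longleftrightarrow> F p = 0 \<and>
     (\<exists>J. (F has_derivative J) (at p) \<and> J \<noteq> (\<lambda>_. 0) \<and> nilpotent_map J)"

end

theory Submission
  imports Defs
begin

theorem theorem2:
  fixes A M Q S T L us \<Delta> um up :: real
    and g :: "real \<Rightarrow> real"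
  assumes "0 < A" "A < 1" "M < 0" "Q > 0" "S > 0"
    and T_def: "T = 1 - A + M"
    and L_def: "L = A * (M + 1) - Q - M"
    and g_def: "g = (\<lambda>u. u ^ 3 - T * u\<^sup>2 - L * u + A * M)"
    and "0 < us" "us < 1" "g us = 0"
    and D_def: "\<Delta> = (us - T)\<^sup>2 - 4 * (us * (us - T) - L)"
    and "\<Delta> \<ge> 0"
    and um_def: "um = (T - us - sqrt \<Delta>) / 2"
    and up_def: "up = (T - us + sqrt \<Delta>) / 2"
    and "us \<le> um" "um \<le> up"
    and "T > 0" "L < 0" "\<Delta> = 0"
    and S_eq: "S = Q * (T - us) / (1 + A + M - us)"
  shows "cusp_point (vfield A M Q S) (um, um)"
proof -
  define w where "w = um"
  have w: "w = (T - us) / 2" using um_def \<open>\<Delta> = 0\<close> w_def by simp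
  have wpos: "w > 0" using \<open>us \<le> um\<close> \<open>0 < us\<close> w_def by simp
  have T2: "T = us + 2 * w" using w by simp
  have L2: "L = (3 * us^2 - T^2 - 2 * T * us) / 4"
    using D_def \<open>\<Delta> = 0\<close> by (simp add: power2_eq_square algebra_simps)
  have q0: "w^2 + (us - T) * w + us * (us - T) - L = 0"
    unfolding L2 unfolding T2 by (simp add: power2_eq_square field_simps)
  have gid: "g w - g us = (w - us) * (w^2 + (us - T) * w + us * (us - T) - L)"
    unfolding g_def by (simp add: power2_eq_square power3_eq_cube algebra_simps)
  have gw: "g w = 0" using gid q0 \<open>g us = 0\<close> by simp
  have eq1: "(w + A) * (1 - w) * (w - M) - Q * w = 0"
  proof -
    have "(w + A) * (1 - w) * (w - M) - Q * w = - g w"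
      unfolding g_def T_def L_def by (simp add: power2_eq_square power3_eq_cube algebra_simps)
    then show ?thesis using gw by simp
  qed
  have den: "1 + A + M - us = 2 * (w + A)" using w T_def by simp
  have Sw: "S * (w + A) = Q * w"
  proof -
    have "w + A > 0" using wpos \<open>0 < A\<close> by simp
    moreover have "S = Q * (2 * w) / (2 * (w + A))" using S_eq den T2 by simp
    ultimately show ?thesis by (simp add: field_simps)
  qed
  have gd: "3 * w^2 - 2 * T * w - L = 0"
    unfolding L2 unfolding T2 by (simp add: power2_eq_square field_simps)
  have pd: "(1 - w) * (w - M) - (w + A) * (w - M) + (w + A) * (1 - w) = Q"
    using gd unfolding T_def L_def by (simp add: power2_eq_square algebra_simps)
  have pdx: "\<And>x. (w + A) * (1 - w) * x + (x * (1 - w) - (w + A) * x) * (w - M) = Q * x"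
  proof -
    fix x
    have "(w + A) * (1 - w) * x + (x * (1 - w) - (w + A) * x) * (w - M)
      = x * ((1 - w) * (w - M) - (w + A) * (w - M) + (w + A) * (1 - w))"
      by (simp add: algebra_simps)
    then show "(w + A) * (1 - w) * x + (x * (1 - w) - (w + A) * x) * (w - M) = Q * x"
      using pd by simp
  qed
  have Sw2: "S * ((w + A) * w) = Q * w\<^sup>2" proof -
    have "S * ((w + A) * w) = (S * (w + A)) * w" by (simp only: mult.assoc)
    then show ?thesis using Sw by (simp add: power2_eq_square)
  qed
  define a where "a = Q * w^2"
  have apos: "a > 0" using a_def wpos \<open>Q > 0\<close> by simp
  define J where "J = (\<lambda>p::real\<times>real. (a * (fst p - snd p), a * (fst p - snd p)))"
  have F: "vfield A M Q S = (\<lambda>p. (fst p ^ 2 * ((fst p + A) * (1 - fst p) * (fst p - M) - Q * snd p),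
      S * (fst p + A) * (fst p - snd p) * snd p))"
    by (simp add: vfield_def case_prod_beta')
  have D: "(vfield A M Q S has_derivative J) (at (w, w))"
    unfolding F
    apply (rule has_derivative_eq_rhs)
     apply (rule derivative_eq_intros refl | simp)+
    apply (rule ext)
    subgoal for h
      using pdx[of "fst h"] eq1 arg_cong[OF Sw2, of "\<lambda>z. z * (fst h - snd h)"]
      unfolding J_def a_def prod_eq_iff fst_conv snd_conv
      apply (intro conjI)
       apply (simp add: algebra_simps)
      apply (simp add: algebra_simps)
      done
    done
  have J0: "J \<noteq> (\<lambda>_. 0)"
  proof
    assume "J = (\<lambda>_. 0)"
    then have "J (1, 0) = 0" by simp
    then show False using apos by (simp add: J_def zero_prod_def)
  qed
  have Jn: "nilpotent_map J"
    unfolding nilpotent_map_def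
    by (rule exI[of _ 2]) (auto simp: J_def numeral_2_eq_2 zero_prod_def)
  have E: "vfield A M Q S (w, w) = 0"
    using eq1 by (simp add: vfield_def zero_prod_def)
  show ?thesis unfolding cusp_point_def using D J0 Jn E w_def by blast
qed

end
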